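(* Let $m\ge2$ and let $\mathbf v=(v_1,\dots,v_m)$ and $\mathbf k=(k_1,\dots,k_m)$ be $m$-tuples of positive integers with $k_i\le v_i$ for all $i$ and $k_1\ge2$, $k_2\ge2$. Let $\mathcal D$ be a ${\rm GC}(\mathbf v,\mathbf k,2)$ on pairwise disjoint point sets $X_1,\dots,X_m$, and put $\mathbf v^+=(v_1+v_2,v_3,\dots,v_m)$ and $\mathbf k^+=(k_1+k_2,k_3,\dots,k_m)$. For each block $\mathbf B=(B_1,\dots,B_m)\in\mathcal D$ let $\mathbf B^+=(B_1\cup B_2,B_3,\dots,B_m)$, and let $\mathcal D^+=\{\mathbf B^+:\mathbf B\in\mathcal D\}$ (as a family indexed by $\mathcal D$). Then $\mathcal D^+$ is a ${\rm GC}(\mathbf v^+,\mathbf k^+,2)$ on the point sets $(X_1\cup X_2,X_3,\dots,X_m)$, and consequently $C(\mathbf v^+,\mathbf k^+,2)\le C(\mathbf v,\mathbf k,2)$.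
   Context: For tuples $\mathbf a,\mathbf b$ of positive integers of the same length $p$ with $\mathbf b\le\mathbf a$ entrywise, and pairwise disjoint sets $Y_1,\dots,Y_p$ with $|Y_i|=a_i$: a block is a $p$-tuple $(B_1,\dots,B_p)$ with $B_i\subseteq Y_i$, $|B_i|=b_i$; a $p$-tuple of sets $(T_1,\dots,T_p)$ is $(\mathbf a,\mathbf b,2)$-admissible if $T_i\subseteq Y_i$, $|T_i|\le b_i$ and $\sum|T_i|=2$, and is contained in a block if $T_i\subseteq B_i$ for all $i$. A ${\rm GC}(\mathbf a,\mathbf b,2)$ is a finite family (repetitions allowed) of blocks containing every admissible tuple in at least one block; $C(\mathbf a,\mathbf b,2)$ is the minimum number of blocks. *)

theory Defs
  imports Main
begin

text \<open>Tuples are lists (index 0 is the paper's index 1). A p-tuple of point sets Y,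
  size vector a and block-size vector b.\<close>

definition pw_disjoint :: "'a set list \<Rightarrow> bool" where
  "pw_disjoint Y \<longleftrightarrow> (\<forall>i<length Y. \<forall>j<length Y. i \<noteq> j \<longrightarrow> Y ! i \<inter> Y ! j = {})"

definition is_block :: "nat list \<Rightarrow> nat list \<Rightarrow> 'a set list \<Rightarrow> 'a set list \<Rightarrow> bool" where
  "is_block a b Y B \<longleftrightarrow> length B = length a \<and>
     (\<forall>i<length a. B ! i \<subseteq> Y ! i \<and> card (B ! i) = b ! i)"

definition admissible2 :: "nat list \<Rightarrow> nat list \<Rightarrow> 'a set list \<Rightarrow> 'a set list \<Rightarrow> bool" where
  "admissible2 a b Y T \<longleftrightarrow> length T = length a \<and>
     (\<forall>i<length a. T ! i \<subseteq> Y ! i \<and> card (T ! i) \<le> b ! i) \<and>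
     (\<Sum>i<length a. card (T ! i)) = 2"

definition contained_in :: "'a set list \<Rightarrow> 'a set list \<Rightarrow> bool" where
  "contained_in T B \<longleftrightarrow> (\<forall>i<length T. T ! i \<subseteq> B ! i)"

text \<open>A GC(a,b,2) on the point sets Y: a finite family (list, repetitions allowed) of blocks
  such that every admissible tuple is contained in at least one block.\<close>
definition is_GC2 :: "nat list \<Rightarrow> nat list \<Rightarrow> 'a set list \<Rightarrow> 'a set list list \<Rightarrow> bool" where
  "is_GC2 a b Y D \<longleftrightarrow> (\<forall>B\<in>set D. is_block a b Y B) \<and>
     (\<forall>T. admissible2 a b Y T \<longrightarrow> (\<exists>B\<in>set D. contained_in T B))"

text \<open>C(a,b,2): minimum number of blocks of a GC(a,b,2); the point sets are taken
  (without loss of generality) to be sets of natural numbers.\<close>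
definition C2 :: "nat list \<Rightarrow> nat list \<Rightarrow> nat" where
  "C2 a b = (LEAST n. \<exists>(Y :: nat set list) D. length Y = length a \<and>
      (\<forall>i<length a. finite (Y ! i) \<and> card (Y ! i) = a ! i) \<and> pw_disjoint Y \<and>
      is_GC2 a b Y D \<and> length D = n)"

end

theory Submission
  imports Defs
begin

lemma nth_plus_Suc: "Suc (Suc i) \<le> length L \<Longrightarrow> (x # drop 2 L) ! Suc i = L ! Suc (Suc i)"
  by (simp add: nth_drop)

lemma extend_subset:
  assumes "finite Y" "T \<subseteq> Y" "card T \<le> c" "c \<le> card Y"
  shows "\<exists>S. T \<subseteq> S \<and> S \<subseteq> Y \<and> card S = c"
proof -
  have fT: "finite T" using assms finite_subset by blast
  have "card (Y - T) = card Y - card T" using fT assms(2) by (rule card_Diff_subset)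
  hence "c - card T \<le> card (Y - T)" using assms(4) by simp
  then obtain R where R: "R \<subseteq> Y - T" "card R = c - card T" and fR: "finite R"
    by (rule obtain_subset_with_card_n)
  have dj: "T \<inter> R = {}" using R(1) by blast
  have "card (T \<union> R) = card T + card R" using fT fR dj by (rule card_Un_disjoint)
  hence "card (T \<union> R) = c" using R(2) assms(3) by simp
  thus ?thesis using R assms by (intro exI[of _ "T \<union> R"]) auto
qed

lemma Y_exists:
  shows "\<exists>Y :: nat set list. length Y = m \<and> (\<forall>i<m. finite (Y ! i) \<and> card (Y ! i) = v ! i) \<and> pw_disjoint Y"
proof -
  define Y where "Y = map (\<lambda>i. (\<lambda>x. x * m + i) ` {..<v!i}) [0..<m]"
  have lY: "length Y = m" unfolding Y_def by simp
  have Yi: "\<And>i. i < m \<Longrightarrow> Y ! i = (\<lambda>x. x * m + i) ` {..<v!i}" unfolding Y_def by simp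
  have fY: "\<And>i. i < m \<Longrightarrow> finite (Y ! i) \<and> card (Y ! i) = v ! i"
  proof -
    fix i assume i: "i < m"
    have "inj_on (\<lambda>x. x * m + i) {..<v!i}" unfolding inj_on_def using i by simp
    hence "card ((\<lambda>x. x * m + i) ` {..<v!i}) = card {..<v!i}"
      by (rule card_image)
    thus "finite (Y ! i) \<and> card (Y ! i) = v ! i" using Yi[OF i] by simp
  qed
  have pw: "pw_disjoint Y" unfolding pw_disjoint_def
  proof (intro allI impI)
    fix i j assume ij: "i < length Y" "j < length Y" "i \<noteq> j"
    have im: "i < m" "j < m" using ij lY by auto
    have neq: "\<And>x y. x * m + i \<noteq> y * m + j"
    proof
      fix x y assume "x * m + i = y * m + j"
      hence "(x * m + i) mod m = (y * m + j) mod m" by simp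
      thus False using im ij(3) by simp
    qed
    show "Y ! i \<inter> Y ! j = {}"
    proof (rule equals0I)
      fix z assume z: "z \<in> Y ! i \<inter> Y ! j"
      then obtain x where x: "z = x * m + i" unfolding Yi[OF im(1)] by blast
      obtain y where y: "z = y * m + j" using z unfolding Yi[OF im(2)] by blast
      show False using neq[of x y] x y by simp
    qed
  qed
  show ?thesis using lY fY pw by blast
qed

lemma GC_on:
  fixes Y :: "'a set list"
  assumes lv: "length v = m" and kv: "\<forall>i<m. k ! i \<le> v ! i" and lY: "length Y = m"
    and fY: "\<And>i. i < m \<Longrightarrow> finite (Y ! i) \<and> card (Y ! i) = v ! i"
  shows "\<exists>D. is_GC2 v k Y D"
proof -
  define U where "U = \<Union>(set Y)"
  have "\<forall>S\<in>set Y. finite S" using fY lY by (auto simp: in_set_conv_nth)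
  hence fU: "finite U" unfolding U_def by simp
  define Bs where "Bs = {B. set B \<subseteq> Pow U \<and> length B = m} \<inter> {B. is_block v k Y B}"
  have "Bs \<subseteq> {B. set B \<subseteq> Pow U \<and> length B = m}" unfolding Bs_def by blast
  moreover have "finite {B. set B \<subseteq> Pow U \<and> length B = m}"
    by (rule finite_lists_length_eq) (use fU in simp)
  ultimately have "finite Bs" by (rule finite_subset)
  then obtain D where D: "set D = Bs" using finite_list by blast
  have "is_GC2 v k Y D" unfolding is_GC2_def
  proof (intro conjI allI impI)
    show "\<forall>B\<in>set D. is_block v k Y B" using D unfolding Bs_def by blast
  next
    fix T assume adm: "admissible2 v k Y T"
    have ex: "\<forall>i<m. \<exists>S. T ! i \<subseteq> S \<and> S \<subseteq> Y ! i \<and> card S = k ! i"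
    proof (intro allI impI)
      fix i assume i: "i < m"
      have "T ! i \<subseteq> Y ! i" "card (T ! i) \<le> k ! i" using adm i lv unfolding admissible2_def by auto
      moreover have "k ! i \<le> card (Y ! i)" using kv i fY[OF i] by simp
      ultimately show "\<exists>S. T ! i \<subseteq> S \<and> S \<subseteq> Y ! i \<and> card S = k ! i"
        using extend_subset[of "Y ! i" "T ! i" "k ! i"] fY[OF i] by blast
    qed
    define B where "B = map (\<lambda>i. SOME S. T ! i \<subseteq> S \<and> S \<subseteq> Y ! i \<and> card S = k ! i) [0..<m]"
    have Bi: "\<And>i. i < m \<Longrightarrow> T ! i \<subseteq> B ! i \<and> B ! i \<subseteq> Y ! i \<and> card (B ! i) = k ! i"
    proof -
      fix i assume i: "i < m"
      have "B ! i = (SOME S. T ! i \<subseteq> S \<and> S \<subseteq> Y ! i \<and> card S = k ! i)" unfolding B_def using i by simp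
      thus "T ! i \<subseteq> B ! i \<and> B ! i \<subseteq> Y ! i \<and> card (B ! i) = k ! i"
        using someI_ex[OF spec[OF ex, of i, THEN mp, OF i]] by simp
    qed
    have lB: "length B = m" unfolding B_def by simp
    have "is_block v k Y B" unfolding is_block_def using Bi lB lv by simp
    moreover have "set B \<subseteq> Pow U" unfolding U_def
    proof
      fix S assume "S \<in> set B"
      then obtain i where i: "i < m" "S = B ! i" using lB by (auto simp: in_set_conv_nth)
      have "B!i \<subseteq> Y!i" "Y!i \<in> set Y" using Bi[OF i(1)] lY i(1) by auto
      thus "S \<in> Pow (\<Union> (set Y))" using i(2) by blast
    qed
    ultimately have "B \<in> set D" using D lB unfolding Bs_def by blast
    moreover have "length T = m" using adm lv unfolding admissible2_def by simp
    hence "contained_in T B" unfolding contained_in_def using Bi by simp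
    ultimately show "\<exists>B\<in>set D. contained_in T B" by blast
  qed
  thus ?thesis by blast
qed

lemma GC_exists:
  assumes lv: "length v = m" and lk: "length k = m" and kv: "\<forall>i<m. k ! i \<le> v ! i"
  shows "\<exists>n (Y :: nat set list) D. length Y = length v \<and>
      (\<forall>i<length v. finite (Y ! i) \<and> card (Y ! i) = v ! i) \<and> pw_disjoint Y \<and>
      is_GC2 v k Y D \<and> length D = n"
proof -
  obtain Y :: "nat set list" where Y: "length Y = m" "\<forall>i<m. finite (Y ! i) \<and> card (Y ! i) = v ! i" "pw_disjoint Y"
    using Y_exists by blast
  obtain D where "is_GC2 v k Y D" using GC_on[of v m k Y] lv kv Y by blast
  thus ?thesis using Y lv by auto
qed

lemma part1:
  fixes n :: nat and v k :: "nat list" and X :: "'a set list" and D :: "'a set list list"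
  assumes len: "length v = Suc (Suc n)" "length k = Suc (Suc n)" "length X = Suc (Suc n)"
    and k0: "k ! 0 \<ge> 2" and k1: "k ! 1 \<ge> 2"
    and fin: "\<forall>i<Suc (Suc n). finite (X ! i)"
    and pw: "pw_disjoint X"
    and gc: "is_GC2 v k X D"
  shows "is_GC2 ((v ! 0 + v ! 1) # drop 2 v) ((k ! 0 + k ! 1) # drop 2 k)
           ((X ! 0 \<union> X ! 1) # drop 2 X) (map (\<lambda>B. (B ! 0 \<union> B ! 1) # drop 2 B) D)"
proof -
  have d01: "X ! 0 \<inter> X ! 1 = {}" using pw len unfolding pw_disjoint_def by force
  have f0: "finite (X!0)" and f1: "finite (X!1)" using fin by auto
  have blocks: "\<forall>B\<in>set (map (\<lambda>B. (B ! 0 \<union> B ! 1) # drop 2 B) D).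
      is_block ((v ! 0 + v ! 1) # drop 2 v) ((k ! 0 + k ! 1) # drop 2 k) ((X ! 0 \<union> X ! 1) # drop 2 X) B"
  proof
    fix B' assume "B' \<in> set (map (\<lambda>B. (B ! 0 \<union> B ! 1) # drop 2 B) D)"
    then obtain B where B: "B \<in> set D" and B': "B' = (B ! 0 \<union> B ! 1) # drop 2 B" by auto
    have bl: "is_block v k X B" using gc B unfolding is_GC2_def by auto
    hence lB: "length B = Suc (Suc n)" and sub: "\<And>i. i < Suc (Suc n) \<Longrightarrow> B!i \<subseteq> X!i \<and> card (B!i) = k!i"
      using len unfolding is_block_def by auto
    have "B!0 \<subseteq> X!0" "B!1 \<subseteq> X!1" "card (B!0) = k!0" "card (B!1) = k!1" using sub[of 0] sub[of 1] by auto
    hence c: "card (B!0 \<union> B!1) = k!0 + k!1"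
      using d01 f0 f1 by (subst card_Un_disjoint) (auto intro: finite_subset)
    show "is_block ((v ! 0 + v ! 1) # drop 2 v) ((k ! 0 + k ! 1) # drop 2 k) ((X ! 0 \<union> X ! 1) # drop 2 X) B'"
      unfolding is_block_def
    proof (rule conjI)
      show "length B' = length ((v ! 0 + v ! 1) # drop 2 v)" using B' lB len by simp
    next
     show "\<forall>i<length ((v ! 0 + v ! 1) # drop 2 v). B' ! i \<subseteq> ((X ! 0 \<union> X ! 1) # drop 2 X) ! i \<and> card (B' ! i) = ((k ! 0 + k ! 1) # drop 2 k) ! i"
     proof (intro allI impI)
      fix i assume i: "i < length ((v ! 0 + v ! 1) # drop 2 v)"
      show "B' ! i \<subseteq> ((X ! 0 \<union> X ! 1) # drop 2 X) ! i \<and> card (B' ! i) = ((k ! 0 + k ! 1) # drop 2 k) ! i"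
      proof (cases i)
        case 0 thus ?thesis using B' c \<open>B!0 \<subseteq> X!0\<close> \<open>B!1 \<subseteq> X!1\<close> by auto
      next
        case (Suc j)
        hence j: "Suc (Suc j) < Suc (Suc n)" using i len by simp
        show ?thesis using Suc B' sub[OF j] j lB len by (simp add: nth_drop)
      qed
     qed
    qed
  qed
  have cover: "\<forall>T. admissible2 ((v ! 0 + v ! 1) # drop 2 v) ((k ! 0 + k ! 1) # drop 2 k) ((X ! 0 \<union> X ! 1) # drop 2 X) T
     \<longrightarrow> (\<exists>B\<in>set (map (\<lambda>B. (B ! 0 \<union> B ! 1) # drop 2 B) D). contained_in T B)"
  proof (intro allI impI)
    fix T assume adm: "admissible2 ((v ! 0 + v ! 1) # drop 2 v) ((k ! 0 + k ! 1) # drop 2 k) ((X ! 0 \<union> X ! 1) # drop 2 X) T"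
    have lT: "length T = Suc n" using adm len unfolding admissible2_def by simp
    have T0: "T!0 \<subseteq> X!0 \<union> X!1" using adm len unfolding admissible2_def by force
    have Ti: "\<And>j. j < n \<Longrightarrow> T ! Suc j \<subseteq> X ! Suc (Suc j) \<and> card (T ! Suc j) \<le> k ! Suc (Suc j)"
    proof -
      fix j assume j: "j < n"
      have all: "\<forall>i<Suc n. T ! i \<subseteq> ((X ! 0 \<union> X ! 1) # drop 2 X) ! i \<and> card (T ! i) \<le> ((k ! 0 + k ! 1) # drop 2 k) ! i"
        using adm len unfolding admissible2_def by simp
      have sj: "Suc j < Suc n" using j by simp
      have "T ! Suc j \<subseteq> ((X ! 0 \<union> X ! 1) # drop 2 X) ! Suc j \<and> card (T ! Suc j) \<le> ((k ! 0 + k ! 1) # drop 2 k) ! Suc j"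
        using spec[OF all, of "Suc j"] sj by blast
      thus "T ! Suc j \<subseteq> X ! Suc (Suc j) \<and> card (T ! Suc j) \<le> k ! Suc (Suc j)"
        using j len by (simp add: nth_drop)
    qed
    have sumT: "(\<Sum>i<Suc n. card (T ! i)) = 2" using adm len unfolding admissible2_def by simp
    hence sumT': "card (T!0) + (\<Sum>i<n. card (T ! Suc i)) = 2" by (simp only: sum.lessThan_Suc_shift)
    define A where "A = T!0 \<inter> X!0"
    define A' where "A' = T!0 \<inter> X!1"
    have TA: "T!0 = A \<union> A'" using T0 A_def A'_def by auto
    have cA: "card (T!0) = card A + card A'" unfolding TA
      using d01 f0 f1 A_def A'_def by (subst card_Un_disjoint) auto
    define T' where "T' = A # A' # tl T"
    have lT': "length T' = Suc (Suc n)" using lT T'_def by simp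
    have nthT': "\<And>j. j < n \<Longrightarrow> T' ! Suc (Suc j) = T ! Suc j" using T'_def lT by (simp add: nth_tl)
    have cAle: "card A \<le> 2" "card A' \<le> 2" using sumT' cA by auto
    have "admissible2 v k X T'" unfolding admissible2_def
    proof (intro conjI)
      show "length T' = length v" using lT' len by simp
    next
     show "\<forall>i<length v. T' ! i \<subseteq> X ! i \<and> card (T' ! i) \<le> k ! i"
     proof (intro allI impI)
      fix i assume i: "i < length v"
      show "T' ! i \<subseteq> X ! i \<and> card (T' ! i) \<le> k ! i"
      proof (cases i)
        case 0 thus ?thesis using T'_def A_def cAle k0 by auto
      next
        case (Suc j) note sj = this
        show ?thesis
        proof (cases j)
          case 0 thus ?thesis using sj T'_def A'_def cAle k1 by auto
        next
          case (Suc l) thus ?thesis using sj i len nthT'[of l] Ti[of l] by auto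
        qed
      qed
     qed
    next
      have "(\<Sum>i<length v. card (T' ! i)) = card A + card A' + (\<Sum>i<n. card (T' ! Suc (Suc i)))"
        unfolding len(1) sum.lessThan_Suc_shift by (simp add: T'_def)
      also have "\<dots> = card (T!0) + (\<Sum>i<n. card (T ! Suc i))" using cA nthT' by simp
      finally show "(\<Sum>i<length v. card (T' ! i)) = 2" using sumT' by simp
    qed
    then obtain B where B: "B \<in> set D" and ct: "contained_in T' B" using gc unfolding is_GC2_def by blast
    have "contained_in T ((B ! 0 \<union> B ! 1) # drop 2 B)" unfolding contained_in_def
    proof (intro allI impI)
      fix i assume i: "i < length T"
      have lB: "length B = Suc (Suc n)" using gc B len unfolding is_GC2_def is_block_def by auto
      show "T ! i \<subseteq> ((B ! 0 \<union> B ! 1) # drop 2 B) ! i"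
      proof (cases i)
        case 0
        have c0: "T'!0 \<subseteq> B!0" and c1: "T'!1 \<subseteq> B!1" using ct lT' unfolding contained_in_def by auto
        hence "A \<subseteq> B!0" "A' \<subseteq> B!1" unfolding T'_def by auto
        thus ?thesis using 0 TA by auto
      next
        case (Suc j)
        hence j: "j < n" using i lT by simp
        have "T' ! Suc (Suc j) \<subseteq> B ! Suc (Suc j)" using ct lT' j unfolding contained_in_def by auto
        thus ?thesis using Suc nthT'[OF j] lB j by (simp add: nth_drop)
      qed
    qed
    thus "\<exists>B\<in>set (map (\<lambda>B. (B ! 0 \<union> B ! 1) # drop 2 B) D). contained_in T B" using B by auto
  qed
  show ?thesis unfolding is_GC2_def using blocks cover by blast
qed

theorem proposition3p22:
  fixes m :: nat and v k :: "nat list" and X :: "'a set list" and D :: "'a set list list"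
  assumes "m \<ge> 2"
    and "length v = m" and "length k = m" and "length X = m"
    and "\<forall>i<m. 0 < k ! i \<and> k ! i \<le> v ! i"
    and "k ! 0 \<ge> 2" and "k ! 1 \<ge> 2"
    and "\<forall>i<m. finite (X ! i) \<and> card (X ! i) = v ! i"
    and "pw_disjoint X"
    and "is_GC2 v k X D"
  shows "is_GC2 ((v ! 0 + v ! 1) # drop 2 v) ((k ! 0 + k ! 1) # drop 2 k)
           ((X ! 0 \<union> X ! 1) # drop 2 X) (map (\<lambda>B. (B ! 0 \<union> B ! 1) # drop 2 B) D)
       \<and> C2 ((v ! 0 + v ! 1) # drop 2 v) ((k ! 0 + k ! 1) # drop 2 k) \<le> C2 v k"
proof -
  obtain n where m: "m = Suc (Suc n)" using assms(1) by (metis add_2_eq_Suc le_Suc_ex)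
  have g1: "is_GC2 ((v ! 0 + v ! 1) # drop 2 v) ((k ! 0 + k ! 1) # drop 2 k)
           ((X ! 0 \<union> X ! 1) # drop 2 X) (map (\<lambda>B. (B ! 0 \<union> B ! 1) # drop 2 B) D)"
  proof (rule part1)
    show "length v = Suc (Suc n)" "length k = Suc (Suc n)" "length X = Suc (Suc n)" using assms(2-4) m by simp_all
    show "2 \<le> k ! 0" "2 \<le> k ! 1" using assms(6,7) by simp_all
    show "\<forall>i<Suc (Suc n). finite (X ! i)" using assms(8) m by simp
    show "pw_disjoint X" "is_GC2 v k X D" using assms(9,10) by simp_all
  qed
  let ?P = "\<lambda>v k n. \<exists>(Y :: nat set list) D. length Y = length v \<and>
      (\<forall>i<length v. finite (Y ! i) \<and> card (Y ! i) = v ! i) \<and> pw_disjoint Y \<and>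
      is_GC2 v k Y D \<and> length D = n"
  have C2eq: "\<And>a b. C2 a b = (LEAST n. ?P a b n)" unfolding C2_def by simp
  have kv: "\<forall>i<m. k ! i \<le> v ! i" using assms(5) by simp
  have "\<exists>n. ?P v k n" using GC_exists[of v m k] assms(2,3) kv by blast
  hence "?P v k (C2 v k)" unfolding C2eq by (rule LeastI_ex)
  then obtain Y :: "nat set list" and E where Y0: "length Y = length v"
      "\<forall>i<length v. finite (Y ! i) \<and> card (Y ! i) = v ! i" "pw_disjoint Y"
      "is_GC2 v k Y E" "length E = C2 v k" by blast
  have Y: "length Y = m"
      "\<forall>i<m. finite (Y ! i) \<and> card (Y ! i) = v ! i" "pw_disjoint Y"
      "is_GC2 v k Y E" "length E = C2 v k" using Y0 assms(2) by simp_all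
  let ?Y = "(Y ! 0 \<union> Y ! 1) # drop 2 Y"
  let ?E = "map (\<lambda>B. (B ! 0 \<union> B ! 1) # drop 2 B) E"
  have gY: "is_GC2 ((v ! 0 + v ! 1) # drop 2 v) ((k ! 0 + k ! 1) # drop 2 k) ?Y ?E"
  proof (rule part1)
    show "length v = Suc (Suc n)" "length k = Suc (Suc n)" "length Y = Suc (Suc n)" using assms(2,3) Y(1) m by simp_all
    show "2 \<le> k ! 0" "2 \<le> k ! 1" using assms(6,7) by simp_all
    show "\<forall>i<Suc (Suc n). finite (Y ! i)" using Y(2) m by simp
    show "pw_disjoint Y" "is_GC2 v k Y E" using Y(3,4) by simp_all
  qed
  have d01: "Y ! 0 \<inter> Y ! 1 = {}" using Y(3) Y(1) m unfolding pw_disjoint_def by force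
  have lY: "length ?Y = length ((v ! 0 + v ! 1) # drop 2 v)" using Y(1) assms(2) m by simp
  have cY: "\<forall>i<length ((v ! 0 + v ! 1) # drop 2 v). finite (?Y ! i) \<and> card (?Y ! i) = ((v ! 0 + v ! 1) # drop 2 v) ! i"
  proof (intro allI impI)
    fix i assume i: "i < length ((v ! 0 + v ! 1) # drop 2 v)"
    show "finite (?Y ! i) \<and> card (?Y ! i) = ((v ! 0 + v ! 1) # drop 2 v) ! i"
    proof (cases i)
      case 0
      have "finite (Y!0)" "finite (Y!1)" "card (Y!0) = v!0" "card (Y!1) = v!1" using Y(2) m by auto
      thus ?thesis using 0 d01 by (simp add: card_Un_disjoint)
    next
      case (Suc j)
      have j: "Suc (Suc j) < m" using i Suc assms(2) m by simp
      have e1: "?Y ! i = Y ! Suc (Suc j)" using Suc Y(1) j by (simp add: nth_drop)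
      have e2: "((v ! 0 + v ! 1) # drop 2 v) ! i = v ! Suc (Suc j)" using Suc assms(2) j by (simp add: nth_drop)
      show ?thesis unfolding e1 e2 using Y(2) j by blast
    qed
  qed
  have pY: "pw_disjoint ?Y" unfolding pw_disjoint_def
  proof (intro allI impI)
    fix i j assume i: "i < length ?Y" and j: "j < length ?Y" and ij: "i \<noteq> j"
    have pw: "\<And>a b. a < m \<Longrightarrow> b < m \<Longrightarrow> a \<noteq> b \<Longrightarrow> Y ! a \<inter> Y ! b = {}"
      using Y(3) Y(1) unfolding pw_disjoint_def by auto
    show "?Y ! i \<inter> ?Y ! j = {}"
    proof (cases i)
      case 0
      then obtain j' where j': "j = Suc j'" using ij by (cases j) auto
      have jl: "Suc (Suc j') < m" using j j' Y(1) m by simp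
      have e: "?Y ! j = Y ! Suc (Suc j')" unfolding j' by (rule nth_plus_Suc) (use jl Y(1) in simp)
      show ?thesis unfolding e using 0 pw[of 0 "Suc (Suc j')"] pw[of 1 "Suc (Suc j')"] jl m by auto
    next
      case (Suc i')
      have il: "Suc (Suc i') < m" using i Suc Y(1) m by simp
      have ei: "?Y ! i = Y ! Suc (Suc i')" unfolding Suc by (rule nth_plus_Suc) (use il Y(1) in simp)
      show ?thesis
      proof (cases j)
        case 0 thus ?thesis unfolding ei using pw[of 0 "Suc (Suc i')"] pw[of 1 "Suc (Suc i')"] il m by auto
      next
        case (Suc j')
        have jl: "Suc (Suc j') < m" using j Suc Y(1) m by simp
        have ej: "?Y ! j = Y ! Suc (Suc j')" unfolding Suc by (rule nth_plus_Suc) (use jl Y(1) in simp)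
        show ?thesis unfolding ei ej using pw[of "Suc (Suc i')" "Suc (Suc j')"] il jl ij \<open>i = Suc i'\<close> Suc by auto
      qed
    qed
  qed
  have "?P ((v ! 0 + v ! 1) # drop 2 v) ((k ! 0 + k ! 1) # drop 2 k) (length ?E)"
    apply (rule exI[of _ ?Y], rule exI[of _ ?E])
    using lY cY pY gY by (intro conjI) (assumption | rule refl)+
  hence "C2 ((v ! 0 + v ! 1) # drop 2 v) ((k ! 0 + k ! 1) # drop 2 k) \<le> length ?E"
    unfolding C2eq by (rule Least_le[where P="?P ((v ! 0 + v ! 1) # drop 2 v) ((k ! 0 + k ! 1) # drop 2 k)"])
  thus ?thesis using g1 Y(5) by simp
qed

end
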